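(* Let $V=V_{\widehat{\mathfrak h}}(1,0)$, $\omega=\omega_0$, and $\omega'\in\operatorname{Sc}(V,\omega)$ with $Y(\omega',z)=\sum_nL'(n)z^{-n-2}$. Identifying $V_1$ with $\mathfrak h$ via $h(-1)\mathbf 1\leftrightarrow h$, one has $\operatorname{Im}\mathcal A_{\omega'}=\operatorname{Ker}_V(L(-1)-L'(-1))\cap V_1$ and $\operatorname{Ker}\mathcal A_{\omega'}=\operatorname{Ker}_VL'(-1)\cap V_1$.
   Context: $\mathfrak h$: $d$-dimensional complex space with nondegenerate symmetric bilinear form and fixed orthonormal basis $h_1,\dots,h_d$; $V_{\widehat{\mathfrak h}}(1,0)$ the level 1 Heisenberg vertex algebra, $\omega_0=\frac12\sum_ih_i(-1)^2\mathbf 1$, $Y(\omega_0,z)=\sum_nL(n)z^{-n-2}$. For $\omega'=\sum_{i\le j}a_{ij}h_i(-1)h_j(-1)\mathbf 1+\sum_ib_ih_i(-2)\mathbf 1$, $\mathcal A_{\omega'}\in\operatorname{End}(\mathfrak h)$ has matrix the symmetric matrix with diagonal $2a_{ii}$ and off-diagonal $a_{ij}$. Semi-conformal vectors: conformal vectors $\omega'$ of vertex operator subalgebras $(U,\omega')$ with $\omega_n|_U=\omega'_n|_U$ for $n\ge 0$. *)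

theory Defs
  imports Complex_Main "HOL-Library.Poly_Mapping" "HOL-Library.Multiset" "HOL-Library.Product_Lexorder"
begin

text \<open>Level 1 Heisenberg VOA on an orthonormal basis indexed by the finite type 'i
  (d = CARD('i)).  A basis monomial of the Fock space V is a multiset M of pairs (i,k);
  the pair (i,k) stands for the creation operator h_i(-k-1), so M stands for the
  vector prod_{(i,k) in M} h_i(-k-1) 1.  V is the space of finitely supported
  complex functions on monomials (i.e. the polynomial ring in the h_i(-k-1)).\<close>

type_synonym 'i mono = "('i \<times> nat) multiset"
type_synonym 'i fock = "'i mono \<Rightarrow>\<^sub>0 complex"

definition fsmult :: "complex \<Rightarrow> 'i fock \<Rightarrow> 'i fock" where
  "fsmult c v = Poly_Mapping.map (\<lambda>x. c * x) v"

definition fbasis :: "'i mono \<Rightarrow> 'i fock" where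
  "fbasis M = Poly_Mapping.single M 1"

definition vac :: "'i fock" where
  "vac = fbasis {#}"

definition lin_ext :: "('i mono \<Rightarrow> 'i fock) \<Rightarrow> 'i fock \<Rightarrow> 'i fock" where
  "lin_ext f v = (\<Sum>M\<in>Poly_Mapping.keys v. fsmult (Poly_Mapping.lookup v M) (f M))"

text \<open>Heisenberg modes h_i(m), level 1, orthonormal basis:
  [h_i(m), h_j(n)] = m delta_ij delta_{m+n,0}; h_i(0) acts as 0 on V.\<close>
definition hmode :: "'i \<Rightarrow> int \<Rightarrow> 'i fock \<Rightarrow> 'i fock" where
  "hmode i m = lin_ext (\<lambda>M.
     if m < 0 then fbasis (add_mset (i, nat (- m - 1)) M)
     else if m = 0 then 0
     else fsmult (of_int m * of_nat (count M (i, nat (m - 1))))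
                 (fbasis (M - {#(i, nat (m - 1))#})))"

definition mwt :: "'i mono \<Rightarrow> nat" where
  "mwt M = sum_mset (image_mset (\<lambda>(i,k). k + 1) M)"

definition maxwt :: "'i fock \<Rightarrow> nat" where
  "maxwt v = Max (insert 0 (mwt ` Poly_Mapping.keys v))"

definition hprod :: "('i \<times> int) list \<Rightarrow> 'i fock \<Rightarrow> 'i fock" where
  "hprod xs = fold (\<lambda>(i,m) acc. hmode i m \<circ> acc) xs id"

text \<open>Mode v_p of the state v = h_{i1}(-k1-1)...h_{ir}(-kr-1) 1 (given as list L),
  i.e. the coefficient of z^{-p-1} in the normally ordered product
  :d^{(k1)} h_{i1}(z) ... d^{(kr)} h_{ir}(z):, where
  d^{(k)} h(z) = sum_m binom(-m-1,k) h(m) z^{-m-k-1}.  Normal ordering: the modes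
  h(m), m>=0, act first, then the creation modes h(m), m<0.  The sum is restricted to a
  box that contains all nonzero terms when applied to w.\<close>
definition modeL :: "('i \<times> nat) list \<Rightarrow> int \<Rightarrow> 'i fock \<Rightarrow> 'i fock" where
  "modeL L p w =
    (let r = length L;
         S = p + 1 - int (\<Sum>(i,k)\<leftarrow>L. k + 1);
         B = \<bar>p\<bar> + 1 + int (\<Sum>(i,k)\<leftarrow>L. k + 1) + int r * int (maxwt w)
     in \<Sum>ms\<in>{ms \<in> listset (replicate r {-B..B}). sum_list ms = S}.
          fsmult (\<Prod>(k,m)\<leftarrow>zip (map snd L) ms. ((of_int (- m - 1) :: complex) gchoose k))
            (hprod (filter (\<lambda>(i,m). m < 0) (zip (map fst L) ms))
              (hprod (filter (\<lambda>(i,m). m \<ge> 0) (zip (map fst L) ms)) w)))"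

text \<open>Vertex operator modes: Y(v,z) = sum_n v_n z^{-n-1}, so  vmode v n w = v_n w.\<close>
definition vmode :: "('i::linorder) fock \<Rightarrow> int \<Rightarrow> 'i fock \<Rightarrow> 'i fock" where
  "vmode v n w = (\<Sum>M\<in>Poly_Mapping.keys v. fsmult (Poly_Mapping.lookup v M) (modeL (sorted_list_of_multiset M) n w))"

text \<open>The standard conformal vector omega_0 = 1/2 sum_i h_i(-1)^2 1; L(n) = vmode omega0 (n+1).\<close>
definition omega0 :: "('i::finite) fock" where
  "omega0 = fsmult (1/2) (\<Sum>i\<in>UNIV. fbasis {#(i,0), (i,0)#})"

definition fsubspace :: "'i fock set \<Rightarrow> bool" where
  "fsubspace U \<longleftrightarrow> 0 \<in> U \<and> (\<forall>u\<in>U. \<forall>v\<in>U. u + v \<in> U) \<and> (\<forall>c. \<forall>u\<in>U. fsmult c u \<in> U)"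

definition fin_dim :: "'i fock set \<Rightarrow> bool" where
  "fin_dim X \<longleftrightarrow> (\<exists>B. finite B \<and> (\<forall>x\<in>X. \<exists>c. x = (\<Sum>b\<in>B. fsmult (c b) b)))"

definition vertex_subalg :: "('i::linorder) fock set \<Rightarrow> bool" where
  "vertex_subalg U \<longleftrightarrow> fsubspace U \<and> vac \<in> U \<and>
     (\<forall>u\<in>U. \<forall>v\<in>U. \<forall>n. vmode u n v \<in> U)"

definition conformal_vector_of :: "('i::linorder) fock set \<Rightarrow> 'i fock \<Rightarrow> bool" where
  "conformal_vector_of U w \<longleftrightarrow>
     w \<in> U \<and>
     (\<exists>c::complex. \<forall>m n::int. \<forall>u\<in>U.
        vmode w (m+1) (vmode w (n+1) u) - vmode w (n+1) (vmode w (m+1) u)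
        = fsmult (of_int (m - n)) (vmode w (m+n+1) u)
          + (if m + n = 0 then fsmult ((of_int m ^ 3 - of_int m) / 12 * c) u else 0)) \<and>
     (\<forall>u\<in>U. \<forall>v\<in>U. \<forall>n::int. vmode (vmode w 0 u) n v = fsmult (- of_int n) (vmode u (n - 1) v)) \<and>
     (\<forall>u\<in>U. \<exists>S::int set. \<exists>f. finite S \<and>
        (\<forall>n\<in>S. f n \<in> U \<and> vmode w 1 (f n) = fsmult (of_int n) (f n)) \<and> u = (\<Sum>n\<in>S. f n)) \<and>
     (\<forall>n::int. fin_dim {u\<in>U. vmode w 1 u = fsmult (of_int n) u}) \<and>
     (\<exists>N::int. \<forall>n<N. \<forall>u\<in>U. vmode w 1 u = fsmult (of_int n) u \<longrightarrow> u = 0)"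

definition semi_conformal :: "('i::{finite,linorder}) fock \<Rightarrow> bool" where
  "semi_conformal w \<longleftrightarrow> (\<exists>U. vertex_subalg U \<and> conformal_vector_of U w \<and>
      (\<forall>u\<in>U. \<forall>n::int. n \<ge> 0 \<longrightarrow> vmode w n u = vmode omega0 n u))"

definition V1 :: "'i fock set" where
  "V1 = {v. \<forall>M\<in>Poly_Mapping.keys v. \<exists>i. M = {#(i,0)#}}"

definition emb :: "('i::finite \<Rightarrow> complex) \<Rightarrow> 'i fock" where
  "emb x = (\<Sum>i\<in>UNIV. fsmult (x i) (fbasis {#(i,0)#}))"

text \<open>The matrix of A_{w} for w = sum_{i<=j} a_ij h_i(-1)h_j(-1)1 + sum_i b_i h_i(-2)1:
  diagonal 2 a_ii, off-diagonal a_ij (symmetric).\<close>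
definition Amat :: "'i fock \<Rightarrow> 'i \<Rightarrow> 'i \<Rightarrow> complex" where
  "Amat w i j = (if i = j then 2 * Poly_Mapping.lookup w {#(i,0), (i,0)#} else Poly_Mapping.lookup w {#(i,0), (j,0)#})"

definition Amap :: "('i::finite) fock \<Rightarrow> ('i \<Rightarrow> complex) \<Rightarrow> ('i \<Rightarrow> complex)" where
  "Amap w x = (\<lambda>i. \<Sum>j\<in>UNIV. Amat w i j * x j)"

end

theory Submission
  imports Defs
begin

abbreviation lk :: "('a \<Rightarrow>\<^sub>0 'b::zero) \<Rightarrow> 'a \<Rightarrow> 'b" where "lk \<equiv> Poly_Mapping.lookup"

lemma lookup_fsmult[simp]: "lk (fsmult c v) k = c * lk v k"
  unfolding fsmult_def by (simp add: Poly_Mapping.map.rep_eq when_def)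

lemma lookup_fbasis: "lk (fbasis M) N = (if M = N then 1 else 0)"
  unfolding fbasis_def by (simp add: lookup_single when_def)

lemma fsmult_0[simp]: "fsmult 0 v = 0" and fsmult_zero[simp]: "fsmult c 0 = 0"
  and fsmult_1[simp]: "fsmult 1 v = v"
  by (rule poly_mapping_eqI; simp)+

lemma fsmult_add: "fsmult c (u + v) = fsmult c u + fsmult c v"
  and fsmult_add2: "fsmult (a + b) v = fsmult a v + fsmult b v"
  and fsmult_mult: "fsmult a (fsmult b v) = fsmult (a * b) v"
  and fsmult_diff: "fsmult c (u - v) = fsmult c u - fsmult c v"
  and fsmult_uminus: "fsmult c (- v) = - fsmult c v"
  by (rule poly_mapping_eqI; simp add: lookup_add lookup_minus algebra_simps)+

lemma fsmult_sum: "fsmult c (sum f S) = (\<Sum>x\<in>S. fsmult c (f x))"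
  by (rule poly_mapping_eqI; simp add: lookup_sum sum_distrib_left)

lemma sum_fsmult: "fsmult (sum f S) v = (\<Sum>x\<in>S. fsmult (f x) v)"
  by (rule poly_mapping_eqI; simp add: lookup_sum sum_distrib_right)

lemma lin_ext_eq:
  assumes "finite S" "Poly_Mapping.keys v \<subseteq> S"
  shows "lin_ext f v = (\<Sum>M\<in>S. fsmult (lk v M) (f M))"
  unfolding lin_ext_def
  by (rule sum.mono_neutral_left[OF assms]) (auto simp: in_keys_iff)

lemma lin_ext_add: "lin_ext f (u + v) = lin_ext f u + lin_ext f v"
proof -
  let ?S = "Poly_Mapping.keys u \<union> Poly_Mapping.keys v"
  have k: "Poly_Mapping.keys (u+v) \<subseteq> ?S" by (rule keys_add)
  show ?thesis
    by (simp add: lin_ext_eq[OF _ k] lin_ext_eq[of ?S u] lin_ext_eq[of ?S v]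
        lookup_add fsmult_add2 sum.distrib)
qed

lemma lin_ext_smult: "lin_ext f (fsmult c v) = fsmult c (lin_ext f v)"
proof -
  have k: "Poly_Mapping.keys (fsmult c v) \<subseteq> Poly_Mapping.keys v"
    by (auto simp: in_keys_iff)
  have "lin_ext f (fsmult c v) = (\<Sum>M\<in>Poly_Mapping.keys v. fsmult (lk (fsmult c v) M) (f M))"
    by (rule lin_ext_eq[OF _ k]) simp
  then show ?thesis
    by (simp add: lin_ext_def fsmult_sum fsmult_mult)
qed

lemma lin_ext_zero[simp]: "lin_ext f 0 = 0"
  by (simp add: lin_ext_def)

lemma lin_ext_fbasis[simp]: "lin_ext f (fbasis M) = f M"
  by (simp add: lin_ext_eq[of "{M}"] lookup_fbasis fbasis_def)

lemma lin_ext_sum: "lin_ext f (sum g S) = (\<Sum>x\<in>S. lin_ext f (g x))"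
  by (induction S rule: infinite_finite_induct) (auto simp: lin_ext_add)

lemma lin_ext_diff: "lin_ext f (u - v) = lin_ext f u - lin_ext f v"
  by (metis add_diff_cancel_right' diff_add_cancel lin_ext_add)



lemma hmode_add: "hmode i m (u + v) = hmode i m u + hmode i m v"
  and hmode_smult: "hmode i m (fsmult c v) = fsmult c (hmode i m v)"
  and hmode_zero[simp]: "hmode i m 0 = 0"
  and hmode_sum: "hmode i m (sum g S) = (\<Sum>x\<in>S. hmode i m (g x))"
  and hmode_diff: "hmode i m (u - v) = hmode i m u - hmode i m v"
  unfolding hmode_def by (rule lin_ext_add lin_ext_smult lin_ext_zero lin_ext_sum lin_ext_diff)+

lemma hmode_neg: "m < 0 \<Longrightarrow> hmode i m (fbasis M) = fbasis (add_mset (i, nat (- m - 1)) M)"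
  unfolding hmode_def by simp

lemma hmode_0[simp]: "hmode i 0 v = 0"
proof -
  have "hmode i 0 = lin_ext (\<lambda>M. 0)" unfolding hmode_def by simp
  then show ?thesis by (simp add: lin_ext_def)
qed

lemma hmode_pos: "m > 0 \<Longrightarrow> hmode i m (fbasis M) =
   fsmult (of_int m * of_nat (count M (i, nat (m - 1)))) (fbasis (M - {#(i, nat (m - 1))#}))"
  unfolding hmode_def by simp

lemma mwt_empty[simp]: "mwt {#} = 0" by (simp add: mwt_def)
lemma mwt_add_mset[simp]: "mwt (add_mset x M) = snd x + 1 + mwt M"
  by (cases x) (simp add: mwt_def)

lemma mwt_ge: "x \<in># M \<Longrightarrow> snd x + 1 \<le> mwt M"
proof (induction M)
  case empty then show ?case by simp
next
  case (add y M) then show ?case by (cases "x = y") auto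
qed

lemma maxwt_ge: "M \<in> Poly_Mapping.keys v \<Longrightarrow> mwt M \<le> maxwt v"
  unfolding maxwt_def by (rule Max_ge) auto

lemma hmode_vanish:
  assumes "m > int (maxwt v)"
  shows "hmode i m v = 0"
proof -
  have "hmode i m v = (\<Sum>M\<in>Poly_Mapping.keys v. fsmult (lk v M) (hmode i m (fbasis M)))"
    unfolding hmode_def by (simp only: lin_ext_def[of _ v] lin_ext_fbasis)
  also have "\<dots> = 0"
  proof (rule sum.neutral, intro ballI)
    fix M assume M: "M \<in> Poly_Mapping.keys v"
    have "count M (i, nat (m - 1)) = 0"
    proof (rule ccontr)
      assume "count M (i, nat (m - 1)) \<noteq> 0"
      then have "(i, nat (m-1)) \<in># M" by (simp add: count_eq_zero_iff)
      from mwt_ge[OF this] maxwt_ge[OF M] assms show False by simp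
    qed
    moreover have "m > 0" using assms by simp
    ultimately show "fsmult (lk v M) (hmode i m (fbasis M)) = 0"
      by (simp add: hmode_pos)
  qed
  finally show ?thesis .
qed

lemma maxwt_fbasis: "maxwt (fbasis M) = mwt M"
  unfolding maxwt_def fbasis_def by simp

lemma hprod_fold: "fold (\<lambda>(i,m) acc. hmode i m \<circ> acc) xs (g :: 'i fock \<Rightarrow> 'i fock) = hprod xs \<circ> g"
 unfolding hprod_def
proof (induction xs arbitrary: g)
  case Nil show ?case by simp
next
  case (Cons x xs)
  obtain a b where x: "x = (a,b)" by (cases x)
  show ?case using Cons.IH[of "hmode a b \<circ> g"] Cons.IH[of "hmode a b \<circ> id"]
    by (simp add: x comp_assoc)
qed

lemma hprod_Nil[simp]: "hprod [] v = v" by (simp add: hprod_def)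
lemma hprod_Cons[simp]: "hprod (x # xs) v = hprod xs (hmode (fst x) (snd x) v)"
proof -
  have "hprod (x # xs) = fold (\<lambda>(i,m) acc. hmode i m \<circ> acc) xs (hmode (fst x) (snd x) \<circ> id)"
    unfolding hprod_def by (cases x) simp
  then show ?thesis by (simp add: hprod_fold)
qed

lemma hprod_zero[simp]: "hprod xs 0 = 0"
  by (induction xs) auto
lemma hprod_add: "hprod xs (u + v) = hprod xs u + hprod xs v"
  by (induction xs arbitrary: u v) (auto simp: hmode_add)
lemma hprod_smult: "hprod xs (fsmult c v) = fsmult c (hprod xs v)"
  by (induction xs arbitrary: v) (auto simp: hmode_smult)

lemma vac_expand: "vac = fbasis {#}" by (simp add: vac_def)

lemma hmode_vac: "m \<ge> 0 \<Longrightarrow> hmode i m vac = 0"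
  by (cases "m = 0") (auto simp: vac_def hmode_pos)

lemma fsmult_fbasis_expand: "v = (\<Sum>M\<in>Poly_Mapping.keys v. fsmult (lk v M) (fbasis M))"
proof (rule poly_mapping_eqI)
  fix N
  show "lk v N = lk (\<Sum>M\<in>Poly_Mapping.keys v. fsmult (lk v M) (fbasis M)) N"
  proof -
    have "lk (\<Sum>M\<in>Poly_Mapping.keys v. fsmult (lk v M) (fbasis M)) N
       = (\<Sum>x\<in>Poly_Mapping.keys v. if x = N then lk v x else 0)"
      unfolding lookup_sum by (rule sum.cong) (auto simp: lookup_fbasis)
    then show ?thesis by (simp add: sum.delta' in_keys_iff)
  qed
qed



lemma vmode_eq:
  assumes "finite S" "Poly_Mapping.keys u \<subseteq> S"
  shows "vmode u n v = (\<Sum>M\<in>S. fsmult (lk u M) (modeL (sorted_list_of_multiset M) n v))"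
  unfolding vmode_def
  by (rule sum.mono_neutral_left[OF assms]) (auto simp: in_keys_iff)

lemma vmode_add: "vmode (u1 + u2) n v = vmode u1 n v + vmode u2 n v"
proof -
  let ?S = "Poly_Mapping.keys u1 \<union> Poly_Mapping.keys u2"
  have k: "Poly_Mapping.keys (u1+u2) \<subseteq> ?S" by (rule keys_add)
  show ?thesis
    by (simp add: vmode_eq[OF _ k] vmode_eq[of ?S u1] vmode_eq[of ?S u2]
        lookup_add fsmult_add2 sum.distrib)
qed

lemma vmode_smult: "vmode (fsmult c u) n v = fsmult c (vmode u n v)"
proof -
  have k: "Poly_Mapping.keys (fsmult c u) \<subseteq> Poly_Mapping.keys u"
    by (auto simp: in_keys_iff)
  have "vmode (fsmult c u) n v = (\<Sum>M\<in>Poly_Mapping.keys u. fsmult (lk (fsmult c u) M) (modeL (sorted_list_of_multiset M) n v))"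
    by (rule vmode_eq[OF _ k]) simp
  then show ?thesis
    by (simp add: vmode_def fsmult_sum fsmult_mult)
qed

lemma vmode_zero1[simp]: "vmode 0 n v = 0"
  by (simp add: vmode_def)

lemma vmode_sum: "vmode (sum g S) n v = (\<Sum>x\<in>S. vmode (g x) n v)"
  by (induction S rule: infinite_finite_induct) (auto simp: vmode_add)

lemma vmode_fbasis: "vmode (fbasis M) n v = modeL (sorted_list_of_multiset M) n v"
  by (simp add: vmode_eq[of "{M}"] lookup_fbasis fbasis_def)

lemma modeL_zero[simp]: "modeL L n 0 = 0"
  unfolding modeL_def Let_def by (simp add: sum.neutral)

lemma vmode_zero2[simp]: "vmode u n 0 = 0"
  by (simp add: vmode_def)

lemma listset_replicate: "ms \<in> listset (replicate r A) \<longleftrightarrow> length ms = r \<and> set ms \<subseteq> A"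
proof (induction r arbitrary: ms)
  case 0 then show ?case by auto
next
  case (Suc r) then show ?case
    by (cases ms) (auto simp: set_Cons_def)
qed

lemma finite_listset_replicate: "finite A \<Longrightarrow> finite (listset (replicate r A))"
proof -
  assume "finite A"
  then have "finite {xs. set xs \<subseteq> A \<and> length xs = r}" by (rule finite_lists_length_eq)
  moreover have "listset (replicate r A) = {xs. set xs \<subseteq> A \<and> length xs = r}"
    by (auto simp: listset_replicate)
  ultimately show ?thesis by simp
qed

lemma modeL2:
  fixes i j :: "'i::linorder" and p :: int and v :: "'i fock"
  defines "B \<equiv> \<bar>p\<bar> + 3 + 2 * int (maxwt v)"
  shows "modeL [(i,0),(j,0)] p v = (\<Sum>m \<in> {m. -B \<le> m \<and> m \<le> B \<and> -B \<le> p-1-m \<and> p-1-m \<le> B}.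
     hprod (filter (\<lambda>(i,m). m < 0) [(i,m),(j,p-1-m)])
       (hprod (filter (\<lambda>(i,m). m \<ge> 0) [(i,m),(j,p-1-m)]) v))"
proof -
  let ?I = "{m. -B \<le> m \<and> m \<le> B \<and> -B \<le> p-1-m \<and> p-1-m \<le> B}"
  have set: "{ms \<in> listset (replicate 2 {-B..B}). sum_list ms = p - 1} = (\<lambda>m. [m, p-1-m]) ` ?I"
  proof (intro equalityI subsetI)
    fix ms assume "ms \<in> {ms \<in> listset (replicate 2 {-B..B}). sum_list ms = p - 1}"
    then have "length ms = 2" "set ms \<subseteq> {-B..B}" "sum_list ms = p - 1"
      by (auto simp: listset_replicate)
    then obtain a b where "ms = [a,b]"
      by (metis (no_types, opaque_lifting) One_nat_def Suc_length_conv length_0_conv numeral_2_eq_2)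
    with \<open>set ms \<subseteq> _\<close> \<open>sum_list ms = _\<close> show "ms \<in> (\<lambda>m. [m, p-1-m]) ` ?I"
      by (auto intro!: image_eqI[of _ _ a])
  next
    fix ms assume "ms \<in> (\<lambda>m. [m, p-1-m]) ` ?I"
    then show "ms \<in> {ms \<in> listset (replicate 2 {-B..B}). sum_list ms = p - 1}"
      by (auto simp: listset_replicate)
  qed
  have inj: "inj_on (\<lambda>m. [m, p-1-m]) ?I" by (auto simp: inj_on_def)
  have "modeL [(i,0),(j,0)] p v = (\<Sum>ms\<in>{ms \<in> listset (replicate 2 {-B..B}). sum_list ms = p - 1}.
     fsmult (\<Prod>(k,m)\<leftarrow>zip [0,0] ms. ((of_int (- m - 1) :: complex) gchoose k))
            (hprod (filter (\<lambda>(i,m). m < 0) (zip [i,j] ms))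
              (hprod (filter (\<lambda>(i,m). m \<ge> 0) (zip [i,j] ms)) v)))"
  proof -
    have W: "(\<Sum>(i,k)\<leftarrow>[(i,0::nat),(j,0::nat)]. k + 1) = 2" by simp
    have r: "length [(i,0::nat),(j,0::nat)] = 2" by simp
    have b: "\<bar>p\<bar> + 1 + int 2 + int 2 * int (maxwt v) = B" unfolding B_def by simp
    have s: "p + 1 - int 2 = p - 1" by simp
    show ?thesis unfolding modeL_def Let_def W r b s by (simp only: list.map fst_conv snd_conv)
  qed
  also have "\<dots> = (\<Sum>m\<in>?I.
     hprod (filter (\<lambda>(i,m). m < 0) [(i,m),(j,p-1-m)])
       (hprod (filter (\<lambda>(i,m). m \<ge> 0) [(i,m),(j,p-1-m)]) v))"
    unfolding set sum.reindex[OF inj] by (simp add: o_def)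
  finally show ?thesis .
qed



definition Q :: "'i \<Rightarrow> 'i \<Rightarrow> 'i fock \<Rightarrow> 'i fock" where
  "Q i j v = hmode j (-2) (hmode i 1 v) + hmode j (-3) (hmode i 2 v)
           + hmode i (-2) (hmode j 1 v) + hmode i (-3) (hmode j 2 v)"

lemma Q_sym: "Q i j v = Q j i v"
  unfolding Q_def by (simp add: algebra_simps)

lemma modeL2_0:
  fixes i j :: "'i::linorder"
  assumes "maxwt v \<le> 2"
  shows "modeL [(i,0),(j,0)] 0 v = Q i j v"
proof -
  define B where "B = \<bar>0::int\<bar> + 3 + 2 * int (maxwt v)"
  let ?I = "{m. -B \<le> m \<and> m \<le> B \<and> -B \<le> 0-1-m \<and> 0-1-m \<le> B}"
  let ?f = "\<lambda>m. hprod (filter (\<lambda>(i,m). m < 0) [(i,m),(j,0-1-m)])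
       (hprod (filter (\<lambda>(i,m). m \<ge> 0) [(i,m),(j,0-1-m)]) v)"
  have "modeL [(i,0),(j,0)] 0 v = sum ?f ?I" unfolding B_def by (rule modeL2)
  also have "\<dots> = sum ?f {-3,-2,1,2}"
  proof (rule sum.mono_neutral_right)
    have "?I \<subseteq> {-B..B}" by auto
    then show "finite ?I" by (rule finite_subset) simp
    show "{-3,-2,1,2} \<subseteq> ?I" unfolding B_def by auto
    show "\<forall>m\<in>?I - {-3,-2,1,2}. ?f m = 0"
    proof
      fix m assume "m \<in> ?I - {-3,-2,1,2}"
      then have m: "m \<notin> {-3,-2,1,2}" by simp
      consider "m = 0" | "m = -1" | "m \<ge> 3" | "m \<le> -4" | "m \<in> {-3,-2,1,2}"
        by (cases "m \<le> -4"; cases "m \<ge> 3"; cases "m = 0"; cases "m = -1"; cases "m = -2"; cases "m = -3"; cases "m = 1"; cases "m = 2") auto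
      then show "?f m = 0"
      proof cases
        case 3 then have "hmode i m v = 0" using assms by (intro hmode_vanish) simp
        then show ?thesis using 3 by simp
      next
        case 4 then have "hmode j (0-1-m) v = 0" using assms by (intro hmode_vanish) simp
        then show ?thesis using 4 by simp
      qed (use m in auto)
    qed
  qed
  also have "\<dots> = Q i j v" unfolding Q_def by (simp add: algebra_simps)
  finally show ?thesis .
qed



lemma modeL2_1:
  fixes i :: "'i::linorder" and v :: "'i fock"
  defines "K \<equiv> 4 + 2 * maxwt v"
  shows "modeL [(i,0),(i,0)] 1 v = fsmult 2 (\<Sum>k<K. hmode i (- int k - 1) (hmode i (int k + 1) v))"
proof -
  define B where "B = \<bar>1::int\<bar> + 3 + 2 * int (maxwt v)"
  have BK: "B = int K" unfolding B_def K_def by simp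
  let ?I = "{m. -B \<le> m \<and> m \<le> B \<and> -B \<le> 1-1-m \<and> 1-1-m \<le> B}"
  let ?f = "\<lambda>m. hprod (filter (\<lambda>(i,m). m < 0) [(i,m),(i,1-1-m)])
       (hprod (filter (\<lambda>(i,m). m \<ge> 0) [(i,m),(i,1-1-m)]) v)"
  let ?g = "\<lambda>k::nat. hmode i (- int k - 1) (hmode i (int k + 1) v)"
  let ?P = "(\<lambda>k. int k + 1) ` {..<K}" and ?N = "(\<lambda>k. - int k - 1) ` {..<K}"
  have "modeL [(i,0),(i,0)] 1 v = sum ?f ?I" unfolding B_def by (rule modeL2)
  also have "?I = insert 0 (?P \<union> ?N)"
  proof (intro equalityI subsetI)
    fix m assume "m \<in> ?I"
    then have m: "-B \<le> m" "m \<le> B" by auto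
    show "m \<in> insert 0 (?P \<union> ?N)"
    proof (cases "m > 0")
      case True then have "m = int (nat (m - 1)) + 1" "nat (m-1) < K" using m BK by auto
      then show ?thesis by blast
    next
      case False
      show ?thesis
      proof (cases "m = 0")
        case False
        with \<open>\<not> m > 0\<close> have "m = - int (nat (-m - 1)) - 1" "nat (-m-1) < K" using m BK by auto
        then show ?thesis by blast
      qed simp
    qed
  next
    fix m assume "m \<in> insert 0 (?P \<union> ?N)"
    then show "m \<in> ?I" using BK by auto
  qed
  also have "sum ?f (insert 0 (?P \<union> ?N)) = ?f 0 + (sum ?f ?P + sum ?f ?N)"
    by (subst sum.insert) (auto intro!: sum.union_disjoint)
  also have "sum ?f ?P = (\<Sum>k<K. ?g k)"
    by (subst sum.reindex) (auto simp: inj_on_def intro!: sum.cong)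
  also have "sum ?f ?N = (\<Sum>k<K. ?g k)"
    by (subst sum.reindex) (auto simp: inj_on_def add.commute intro!: sum.cong)
  finally have e: "modeL [(i,0),(i,0)] 1 v = ?f 0 + ((\<Sum>k<K. ?g k) + (\<Sum>k<K. ?g k))" .
  have f0: "?f 0 = 0" by simp
  have two: "fsmult 2 (\<Sum>k<K. ?g k) = (\<Sum>k<K. ?g k) + (\<Sum>k<K. ?g k)"
    using fsmult_add2[of 1 1 "(\<Sum>k<K. ?g k)"] by (simp only: one_add_one fsmult_1)
  show ?thesis unfolding e f0 two by (simp only: add_0_left)
qed



lemma sorted_pair: "sorted_list_of_multiset {#(i::'i::linorder,0::nat),(i,0)#} = [(i,0),(i,0)]"
  by simp

lemma mwt_count:
  fixes N :: "('i::finite \<times> nat) multiset"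
  shows "(\<forall>x\<in>#N. snd x < K) \<Longrightarrow> mwt N = (\<Sum>i\<in>UNIV. \<Sum>k<K. (k+1) * count N (i,k))"
proof (induction N)
  case empty then show ?case by simp
next
  case (add x N)
  obtain a b where x: "x = (a,b)" by (cases x)
  have b: "b < K" using add.prems x by simp
  have "(\<Sum>i\<in>UNIV. \<Sum>k<K. (k+1) * count (add_mset x N) (i,k))
      = (\<Sum>i\<in>UNIV. \<Sum>k<K. (k+1) * count N (i,k)) + (\<Sum>i\<in>UNIV. \<Sum>k<K. if i = a \<and> k = b then k + 1 else 0)"
    unfolding sum.distrib[symmetric]
    by (rule sum.cong[OF refl], rule sum.cong[OF refl]) (auto simp: x)
  also have "(\<Sum>i\<in>UNIV. \<Sum>k<K. if i = a \<and> k = b then k + 1 else 0) = b + 1"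
  proof -
    have "(\<Sum>i\<in>UNIV. \<Sum>k<K. if i = a \<and> k = b then k + 1 else 0)
        = (\<Sum>i\<in>UNIV. if i = a then (\<Sum>k<K. if k = b then k + 1 else 0) else 0)"
      by (rule sum.cong) auto
    also have "\<dots> = b + 1" using b by simp
    finally show ?thesis .
  qed
  finally show ?case using add x by simp
qed

lemma lk_sum_fbasis:
  assumes "finite S"
  shows "lk (\<Sum>M\<in>S. fsmult (c M) (fbasis M)) N = (if N \<in> S then c N else 0)"
proof -
  have "lk (\<Sum>M\<in>S. fsmult (c M) (fbasis M)) N = (\<Sum>M\<in>S. if M = N then c M else 0)"
    unfolding lookup_sum by (rule sum.cong) (auto simp: lookup_fbasis)
  then show ?thesis using assms by (simp add: sum.delta')
qed

lemma g_fbasis: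
  "hmode i (- int k - 1) (hmode i (int k + 1) (fbasis M)) = fsmult (of_nat ((k+1) * count M (i,k))) (fbasis M)"
proof (cases "count M (i,k) = 0")
  case True then show ?thesis by (simp add: hmode_pos)
next
  case False
  then have "(i,k) \<in># M" by (simp add: count_eq_zero_iff)
  then have "add_mset (i,k) (M - {#(i,k)#}) = M" by simp
  then show ?thesis
    by (simp add: hmode_pos hmode_smult hmode_neg nat_add_distrib algebra_simps)
qed

lemma vmode_omega0:
  "vmode (omega0 :: ('i::{finite,linorder}) fock) n v = fsmult (1/2) (\<Sum>i\<in>UNIV. modeL [(i,0),(i,0)] n v)"
  unfolding omega0_def by (simp add: vmode_smult vmode_sum vmode_fbasis)

lemma L0_lookup:
  fixes v :: "('i::{finite,linorder}) fock"
  shows "lk (vmode omega0 1 v) N = of_nat (mwt N) * lk v N"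
proof -
  define K where "K = 4 + 2 * maxwt v"
  let ?g = "\<lambda>i k v. hmode i (- int k - 1) (hmode i (int k + 1) v)"
  have "vmode omega0 1 v = fsmult (1/2) (\<Sum>i\<in>UNIV. fsmult 2 (\<Sum>k<K. ?g i k v))"
    unfolding vmode_omega0 K_def modeL2_1 ..
  also have "\<dots> = (\<Sum>i\<in>UNIV. \<Sum>k<K. ?g i k v)"
    by (simp add: fsmult_sum fsmult_mult)
  also have "\<dots> = (\<Sum>i\<in>UNIV. \<Sum>k<K. \<Sum>M\<in>Poly_Mapping.keys v.
                     fsmult (lk v M * of_nat ((k+1) * count M (i,k))) (fbasis M))"
  proof -
    have "?g i k v = (\<Sum>M\<in>Poly_Mapping.keys v. fsmult (lk v M * of_nat ((k+1) * count M (i,k))) (fbasis M))" for i k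
      by (subst fsmult_fbasis_expand[of v]) (simp add: hmode_sum hmode_smult g_fbasis fsmult_mult)
    then show ?thesis by simp
  qed
  finally have e: "vmode omega0 1 v = \<dots>" .
  show ?thesis
  proof (cases "N \<in> Poly_Mapping.keys v")
    case False
    then have "lk v N = 0" by (simp add: in_keys_iff)
    moreover have "lk (vmode omega0 1 v) N = 0"
      unfolding e using False by (auto simp: lookup_sum lookup_fbasis intro!: sum.neutral)
    ultimately show ?thesis by simp
  next
    case True
    have "lk (vmode omega0 1 v) N = (\<Sum>i\<in>UNIV. \<Sum>k<K. lk v N * of_nat ((k+1) * count N (i,k)))"
      unfolding e lookup_sum[where X=UNIV] lookup_sum[where X="{..<K}"] lk_sum_fbasis[OF finite_keys]
      by (simp add: True)
    also have "\<dots> = lk v N * of_nat (\<Sum>i\<in>UNIV. \<Sum>k<K. (k+1) * count N (i,k))"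
      by (simp add: sum_distrib_left)
    also have "(\<Sum>i\<in>UNIV. \<Sum>k<K. (k+1) * count N (i,k)) = mwt N"
    proof (rule mwt_count[symmetric], intro ballI)
      fix x assume "x \<in># N"
      from mwt_ge[OF this] maxwt_ge[OF True] show "snd x < K" unfolding K_def by simp
    qed
    finally show ?thesis by simp
  qed
qed



lemma maxwt_vac[simp]: "maxwt vac = 0"
  by (simp add: vac_def maxwt_fbasis)

lemma hprod_vac_nonneg: "xs \<noteq> [] \<Longrightarrow> snd (hd xs) \<ge> 0 \<Longrightarrow> hprod xs vac = 0"
  by (cases xs) (auto simp: hmode_vac)

lemma hprod_create:
  "hprod (map (\<lambda>(i,k). (i, - int k - 1)) L) (fbasis M) = fbasis (M + mset L)"
proof (induction L arbitrary: M)
  case Nil then show ?case by simp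
next
  case (Cons x L)
  obtain i k where x: "x = (i,k)" by (cases x)
  have "nat (- (- int k - 1) - 1) = k" by simp
  then show ?case using Cons[of "add_mset (i,k) M"] by (simp add: x hmode_neg)
qed

lemma sum_list_ms0: "sum_list (map (\<lambda>(i,k). - int k - 1) L) = - int (\<Sum>(i,k)\<leftarrow>L. k + 1)"
  by (induction L) auto

lemma modeL_create:
  fixes L :: "('i::linorder \<times> nat) list"
  shows "modeL L (-1) vac = fbasis (mset L)"
proof -
  define r where "r = length L"
  define W where "W = (\<Sum>(i,k)\<leftarrow>L. k + 1)"
  define B where "B = \<bar>-1::int\<bar> + 1 + int W + int r * int (maxwt (vac :: 'i fock))"
  define Set where "Set = {ms \<in> listset (replicate r {-B..B}). sum_list ms = -1 + 1 - int W}"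
  define F where "F = (\<lambda>ms. fsmult (\<Prod>(k,m)\<leftarrow>zip (map snd L) ms. ((of_int (- m - 1) :: complex) gchoose k))
            (hprod (filter (\<lambda>(i,m). m < 0) (zip (map fst L) ms))
              (hprod (filter (\<lambda>(i,m). m \<ge> 0) (zip (map fst L) ms)) (vac :: 'i fock))))"
  define ms0 where "ms0 = map (\<lambda>(i,k). - int k - 1) L"
  have e: "modeL L (-1) vac = sum F Set"
    unfolding modeL_def Let_def F_def Set_def B_def W_def r_def ..
  have B: "B = 2 + int W" unfolding B_def by simp
  have fin: "finite Set" unfolding Set_def
    by (rule finite_subset[OF _ finite_listset_replicate[of "{-B..B}" r]]) auto
  have len0: "length ms0 = r" unfolding ms0_def r_def by simp
  have nth0: "j < r \<Longrightarrow> ms0 ! j = - int (snd (L ! j)) - 1" for j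
    unfolding ms0_def r_def by (simp add: case_prod_beta)
  have kW: "j < r \<Longrightarrow> snd (L ! j) + 1 \<le> W" for j
  proof -
    assume "j < r"
    then have "snd (L!j) + 1 \<in> set (map (\<lambda>(i,k). k + 1) L)"
      unfolding r_def by (auto simp: case_prod_beta intro!: image_eqI[of _ _ "L!j"])
    then show ?thesis unfolding W_def by (rule member_le_sum_list) auto
  qed
  have in0: "ms0 \<in> Set"
  proof -
    have "set ms0 \<subseteq> {-B..B}"
    proof
      fix x assume "x \<in> set ms0"
      then obtain j where j: "j < r" "x = ms0 ! j" using len0 by (auto simp: in_set_conv_nth)
      with nth0 kW[OF j(1)] show "x \<in> {-B..B}" unfolding B by auto
    qed
    then show ?thesis unfolding Set_def using len0 sum_list_ms0[of L]
      by (simp add: listset_replicate ms0_def W_def)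
  qed
  have F0: "F ms0 = fbasis (mset L)"
  proof -
    have z: "zip (map fst L) ms0 = map (\<lambda>(i,k). (i, - int k - 1)) L"
      unfolding ms0_def by (induction L) auto
    have z2: "zip (map snd L) ms0 = map (\<lambda>(i,k). (k, - int k - 1)) L"
      unfolding ms0_def by (induction L) auto
    have p: "(\<Prod>(k,m)\<leftarrow>zip (map snd L) ms0. ((of_int (- m - 1) :: complex) gchoose k)) = 1"
      unfolding z2 by (induction L) (auto simp: binomial_gbinomial[symmetric])
    have f1: "filter (\<lambda>(i,m). m \<ge> 0) (zip (map fst L) ms0) = []"
      unfolding z by (induction L) auto
    have f2: "filter (\<lambda>(i,m). m < 0) (zip (map fst L) ms0) = zip (map fst L) ms0"
      unfolding z by (induction L) auto
    show ?thesis unfolding F_def p f1 f2 by (simp add: z vac_def hprod_create)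
  qed
  have Fz: "F ms = 0" if ms: "ms \<in> Set" "ms \<noteq> ms0" for ms
  proof -
    from ms(1) have len: "length ms = r" and sm: "sum_list ms = - int W"
      unfolding Set_def by (auto simp: listset_replicate)
    show ?thesis
    proof (cases "\<exists>j<r. ms ! j \<ge> 0")
      case True
      then obtain j where j: "j < r" "ms ! j \<ge> 0" by blast
      let ?xs = "filter (\<lambda>(i,m). m \<ge> 0) (zip (map fst L) ms)"
      have "(fst (L!j), ms!j) \<in> set ?xs" using j len unfolding r_def
        by (auto simp: in_set_conv_nth intro!: exI[of _ j])
      then have ne: "?xs \<noteq> []" by (metis empty_iff list.set(1))
      have "snd (hd ?xs) \<ge> 0"
      proof -
        have h: "hd ?xs \<in> set ?xs" using ne by (rule hd_in_set)
        obtain a b where ab: "hd ?xs = (a,b)" by (cases "hd ?xs")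
        from h have "(a,b) \<in> set ?xs" unfolding ab .
        then have "b \<ge> 0" by simp
        then show ?thesis using ab by simp
      qed
      then have "hprod ?xs vac = 0" using ne by (rule hprod_vac_nonneg[rotated])
      then show ?thesis unfolding F_def by simp
    next
      case False
      then have neg: "j < r \<Longrightarrow> ms ! j < 0" for j by auto
      have "\<exists>j<r. nat (- ms ! j - 1) < snd (L ! j)"
      proof (rule ccontr)
        assume "\<not> ?thesis"
        then have le: "j < r \<Longrightarrow> ms ! j \<le> ms0 ! j" for j
          using neg[of j] nth0[of j] by force
        from ms(2) len len0 obtain j where j: "j < r" "ms ! j \<noteq> ms0 ! j"
          by (metis nth_equalityI)
        have "(\<Sum>j = 0..<r. ms ! j) < (\<Sum>j = 0..<r. ms0 ! j)"
          by (rule sum_strict_mono_ex1) (use le j in \<open>auto simp: order.strict_iff_order\<close>)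
        moreover have "sum_list ms0 = - int W" unfolding ms0_def W_def by (rule sum_list_ms0)
        ultimately show False using sm len len0 by (simp add: sum_list_sum_nth)
      qed
      then obtain j where j: "j < r" "nat (- ms ! j - 1) < snd (L ! j)" by blast
      have g: "((of_int (- (ms!j) - 1) :: complex) gchoose (snd (L!j))) = 0"
      proof -
        have "(of_int (- (ms!j) - 1) :: complex) = of_nat (nat (- ms ! j - 1))"
          using neg[OF j(1)] by simp
        then show ?thesis using j(2) by (simp add: binomial_gbinomial[symmetric])
      qed
      have "(snd (L!j), ms!j) \<in> set (zip (map snd L) ms)" using j len unfolding r_def
        by (auto simp: in_set_conv_nth intro!: exI[of _ j])
      then have "(0::complex) \<in> set (map (\<lambda>(k,m). ((of_int (- m - 1) :: complex) gchoose k)) (zip (map snd L) ms))"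
        using g by force
      then have "(\<Prod>(k,m)\<leftarrow>zip (map snd L) ms. ((of_int (- m - 1) :: complex) gchoose k)) = 0"
        by (simp add: prod_list_zero_iff)
      then show ?thesis unfolding F_def by simp
    qed
  qed
  have "sum F Set = F ms0 + sum F (Set - {ms0})"
    using fin in0 by (simp add: sum.remove)
  also have "sum F (Set - {ms0}) = 0" using Fz by (intro sum.neutral) auto
  finally show ?thesis using e F0 by simp
qed

lemma vmode_create: "vmode u (-1) vac = u"
proof -
  have "vmode u (-1) vac = (\<Sum>M\<in>Poly_Mapping.keys u. fsmult (lk u M) (fbasis M))"
    unfolding vmode_def by (simp add: modeL_create)
  then show ?thesis using fsmult_fbasis_expand[of u] by simp
qed



lemma modeL1: "modeL [(i,1)] 0 v = 0"
  unfolding modeL_def Let_def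
proof (rule sum.neutral, intro ballI)
  fix ms assume "ms \<in> {ms \<in> listset (replicate (length [(i, 1::nat)]) {- (\<bar>0\<bar> + 1 + int (\<Sum>(i, k)\<leftarrow>[(i, 1::nat)]. k + 1) +
            int (length [(i, 1::nat)]) * int (maxwt v))..\<bar>0\<bar> + 1 + int (\<Sum>(i, k)\<leftarrow>[(i, 1::nat)]. k + 1) +
            int (length [(i, 1::nat)]) * int (maxwt v)}).
              sum_list ms = 0 + 1 - int (\<Sum>(i, k)\<leftarrow>[(i, 1::nat)]. k + 1)}"
  then have "length ms = 1" "sum_list ms = -1" by (auto simp: listset_replicate)
  then have "ms = [-1]" by (cases ms) auto
  then show "fsmult (\<Prod>(k, m)\<leftarrow>zip (map snd [(i, 1::nat)]) ms. complex_of_int (- m - 1) gchoose k)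
          (hprod (filter (\<lambda>(i, m). m < 0) (zip (map fst [(i, 1)]) ms))
            (hprod (filter (\<lambda>(i, m). 0 \<le> m) (zip (map fst [(i, 1)]) ms)) v)) = 0"
    by simp
qed

lemma mwt_pos: "N \<noteq> {#} \<Longrightarrow> mwt N \<ge> 1"
  by (cases N) auto

lemma mwt1: assumes m: "mwt N = 1" shows "\<exists>a. N = {#(a,0)#}"
proof (cases N)
  case empty then show ?thesis using m by simp
next
  case (add x N')
  obtain a k where x: "x = (a,k)" by (cases x)
  from m add x have "k = 0" "mwt N' = 0" by auto
  then have "N' = {#}" using mwt_pos[of N'] by fastforce
  then show ?thesis using add x \<open>k = 0\<close> by auto
qed

lemma mwt2: assumes m: "mwt N = 2" shows "(\<exists>a b. N = {#(a,0),(b,0)#}) \<or> (\<exists>a. N = {#(a,1)#})"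
proof (cases N)
  case empty then show ?thesis using m by simp
next
  case (add x N')
  obtain a k where x: "x = (a,k)" by (cases x)
  from m add x have "k + mwt N' = 1" by simp
  then consider "k = 0" "mwt N' = 1" | "k = 1" "mwt N' = 0" by linarith
  then show ?thesis
  proof cases
    case 1
    then obtain b where "N' = {#(b,0)#}" using mwt1 by blast
    then show ?thesis using add x 1 by auto
  next
    case 2
    then have "N' = {#}" using mwt_pos[of N'] by fastforce
    then show ?thesis using add x 2 by auto
  qed
qed

lemma pair_eq: "({#(i,0::nat),(j,0)#} = {#(a,0),(b,0)#}) \<longleftrightarrow> (i = a \<and> j = b) \<or> (i = b \<and> j = a)"
  by (auto simp: add_eq_conv_ex)

lemma Amat_sym: "Amat w i j = Amat w j i"
  unfolding Amat_def by (simp add: add_mset_commute)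

lemma sum2_pair:
  fixes c :: "'i::finite \<Rightarrow> 'i \<Rightarrow> complex"
  shows "(\<Sum>i\<in>UNIV. \<Sum>j\<in>UNIV. if {#(i,0::nat),(j,0)#} = {#(a,0),(b,0)#} then c i j else 0)
       = (if a = b then c a a else c a b + c b a)"
proof (cases "a = b")
  case True
  have "(\<Sum>i\<in>UNIV. \<Sum>j\<in>UNIV. if {#(i,0::nat),(j,0)#} = {#(a,0),(b,0)#} then c i j else 0)
      = (\<Sum>i\<in>UNIV. if i = a then (\<Sum>j\<in>UNIV. if j = a then c i j else 0) else 0)"
    using True by (intro sum.cong refl) (auto simp: pair_eq)
  then show ?thesis using True by simp
next
  case False
  have "(\<Sum>i\<in>UNIV. \<Sum>j\<in>UNIV. if {#(i,0::nat),(j,0)#} = {#(a,0),(b,0)#} then c i j else 0)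
      = (\<Sum>i\<in>UNIV. (if i = a then (\<Sum>j\<in>UNIV. if j = b then c i j else 0) else 0)
                   + (if i = b then (\<Sum>j\<in>UNIV. if j = a then c i j else 0) else 0))"
    using False by (intro sum.cong refl) (auto simp: pair_eq sum.distrib[symmetric] intro!: sum.cong)
  then show ?thesis using False by (simp add: sum.distrib)
qed

definition ee :: "'i \<Rightarrow> 'i fock" where "ee k = fbasis {#(k,0)#}"
definition ff :: "'i \<Rightarrow> 'i fock" where "ff k = fbasis {#(k,1)#}"
definition gg :: "'i \<Rightarrow> 'i \<Rightarrow> 'i fock" where "gg k l = fbasis {#(k,0),(l,0)#}"

lemma w_decomp:
  fixes w :: "('i::{finite,linorder}) fock"
  assumes wt: "\<And>N. lk w N \<noteq> 0 \<Longrightarrow> mwt N = 2"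
  shows "w = (\<Sum>i\<in>UNIV. \<Sum>j\<in>UNIV. fsmult (Amat w i j / 2) (gg i j))
           + (\<Sum>i\<in>UNIV. fsmult (lk w {#(i,1)#}) (ff i))"
proof (rule poly_mapping_eqI)
  fix N
  let ?R = "(\<Sum>i\<in>UNIV. \<Sum>j\<in>UNIV. fsmult (Amat w i j / 2) (gg i j))
           + (\<Sum>i\<in>UNIV. fsmult (lk w {#(i,1)#}) (ff i))"
  have R: "lk ((\<Sum>i\<in>UNIV. \<Sum>j\<in>UNIV. fsmult (Amat w i j / 2) (gg i j))
           + (\<Sum>i\<in>UNIV. fsmult (lk w {#(i,1)#}) (ff i))) N
     = (\<Sum>i\<in>UNIV. \<Sum>j\<in>UNIV. if {#(i,0),(j,0)#} = N then Amat w i j / 2 else 0)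
       + (\<Sum>i\<in>UNIV. if {#(i,1)#} = N then lk w {#(i,1)#} else 0)"
    by (simp add: lookup_add lookup_sum gg_def ff_def lookup_fbasis if_distrib[of "\<lambda>x. _ * x"] cong: if_cong)
  show "lk w N = lk ?R N"
  proof (cases "mwt N = 2")
    case True
    then consider a b where "N = {#(a,0),(b,0)#}" | a where "N = {#(a,1)#}" using mwt2 by blast
    then show ?thesis
    proof cases
      case 1
      have s2: "(\<Sum>i\<in>UNIV. if {#(i,1::nat)#} = N then lk w {#(i,1)#} else 0) = 0"
        using 1 by (intro sum.neutral) auto
      show ?thesis unfolding R s2 using 1
        by (simp add: sum2_pair Amat_def add_mset_commute)
    next
      case 2
      have s1: "(\<Sum>i\<in>UNIV. \<Sum>j\<in>UNIV. if {#(i,0::nat),(j,0)#} = N then Amat w i j / 2 else 0) = 0"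
        using 2 by (intro sum.neutral) auto
      show ?thesis unfolding R s1 using 2 by simp
    qed
  next
    case False
    then have "lk w N = 0" using wt by blast
    moreover have "(\<Sum>i\<in>UNIV. \<Sum>j\<in>UNIV. if {#(i,0::nat),(j,0)#} = N then Amat w i j / 2 else 0) = 0"
      using False by (intro sum.neutral ballI) auto
    moreover have "(\<Sum>i\<in>UNIV. if {#(i,1::nat)#} = N then lk w {#(i,1)#} else 0) = 0"
      using False by (intro sum.neutral) auto
    ultimately show ?thesis unfolding R by simp
  qed
qed



definition pp :: "'i \<Rightarrow> 'i \<Rightarrow> 'i fock" where "pp j l = fbasis {#(j,1),(l,0)#}"

lemma Q_add: "Q i j (u + v) = Q i j u + Q i j v"
  unfolding Q_def by (simp add: hmode_add algebra_simps)
lemma Q_smult: "Q i j (fsmult c v) = fsmult c (Q i j v)"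
  unfolding Q_def by (simp add: hmode_smult fsmult_add)
lemma Q_zero[simp]: "Q i j 0 = 0"
  unfolding Q_def by simp
lemma Q_sum: "Q i j (sum g S) = (\<Sum>x\<in>S. Q i j (g x))"
  by (induction S rule: infinite_finite_induct) (auto simp: Q_add)

lemma fsmult_if0: "fsmult c (if P then x else 0) = (if P then fsmult c x else 0)"
  by simp

lemma sum_if_out: "(\<Sum>j\<in>A. if P then f j else 0) = (if P then (\<Sum>j\<in>A. f j) else 0)"
  by simp

lemma h1_ee: "hmode i 1 (ee k) = (if i = k then vac else 0)"
  unfolding ee_def by (simp add: hmode_pos vac_def)
lemma h2_ee: "hmode i 2 (ee k) = 0"
  unfolding ee_def by (simp add: hmode_pos)
lemma hm2_vac: "hmode j (-2) vac = ff j"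
  unfolding vac_def ff_def by (simp add: hmode_neg)

lemma Q_ee: "Q i j (ee k) = (if i = k then ff j else 0) + (if j = k then ff i else 0)"
  unfolding Q_def by (simp add: h1_ee h2_ee hm2_vac)

lemma h1_gg: "hmode i 1 (gg k l) = (if i = k then ee l else 0) + (if i = l then ee k else 0)"
proof -
  have e: "hmode i 1 (gg k l) = fsmult (of_nat (count {#(k,0),(l,0)#} (i,0))) (fbasis ({#(k,0),(l,0)#} - {#(i,0)#}))"
    unfolding gg_def by (simp add: hmode_pos)
  show ?thesis
    by (cases "i = k"; cases "i = l") (auto simp: gg_def ee_def hmode_pos add_mset_commute fsmult_add2[of 1 1, simplified])
qed
lemma h2_gg: "hmode i 2 (gg k l) = 0"
  unfolding gg_def by (simp add: hmode_pos)
lemma hm2_ee: "hmode j (-2) (ee l) = pp j l"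
  unfolding ee_def pp_def by (simp add: hmode_neg)

lemma Q_gg: "Q i j (gg k l) = (if i = k then pp j l else 0) + (if i = l then pp j k else 0)
                             + ((if j = k then pp i l else 0) + (if j = l then pp i k else 0))"
  unfolding Q_def by (simp add: h1_gg h2_gg hm2_ee hmode_add algebra_simps)

lemma lk_Q_ff: "lk (Q i j (ff k)) {#(a,1),(b,0)#} = 0"
proof -
  have "hmode i 1 (ff k) = 0" unfolding ff_def by (simp add: hmode_pos)
  moreover have "hmode i 2 (ff k) = (if i = k then fsmult 2 vac else 0)"
    unfolding ff_def vac_def by (simp add: hmode_pos)
  moreover have "hmode j 2 (ff k) = (if j = k then fsmult 2 vac else 0)"
    unfolding ff_def vac_def by (simp add: hmode_pos)
  moreover have "lk (hmode i (-3) vac) {#(a,1),(b,0)#} = 0" for i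
    unfolding vac_def by (simp add: hmode_neg lookup_fbasis)
  moreover have "hmode j 1 (ff k) = 0" unfolding ff_def by (simp add: hmode_pos)
  ultimately show ?thesis unfolding Q_def by (simp add: lookup_add hmode_smult)
qed

definition SA :: "('i::finite \<Rightarrow> 'i \<Rightarrow> complex) \<Rightarrow> 'i fock \<Rightarrow> 'i fock" where
  "SA C v = (\<Sum>i\<in>UNIV. \<Sum>j\<in>UNIV. fsmult (C i j / 2) (Q i j v))"

lemma SA_add: "SA C (u + v) = SA C u + SA C v"
  unfolding SA_def by (simp add: Q_add fsmult_add sum.distrib)
lemma SA_smult: "SA C (fsmult c v) = fsmult c (SA C v)"
  unfolding SA_def by (simp add: Q_smult fsmult_sum fsmult_mult mult.commute)
lemma SA_zero[simp]: "SA C 0 = 0"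
  unfolding SA_def by simp
lemma SA_sum: "SA C (sum g S) = (\<Sum>x\<in>S. SA C (g x))"
  by (induction S rule: infinite_finite_induct) (auto simp: SA_add)

lemma SA_ee:
  assumes sym: "\<And>i j. C i j = C j i"
  shows "SA C (ee k) = (\<Sum>j\<in>UNIV. fsmult (C k j) (ff j))"
proof -
  have "SA C (ee k) = (\<Sum>i\<in>UNIV. \<Sum>j\<in>UNIV. (if i = k then fsmult (C i j / 2) (ff j) else 0))
                    + (\<Sum>i\<in>UNIV. \<Sum>j\<in>UNIV. (if j = k then fsmult (C i j / 2) (ff i) else 0))"
    unfolding SA_def Q_ee by (simp only: fsmult_add sum.distrib fsmult_if0)
  also have "\<dots> = (\<Sum>j\<in>UNIV. fsmult (C k j / 2) (ff j)) + (\<Sum>i\<in>UNIV. fsmult (C k i / 2) (ff i))"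
    by (simp add: sym sum_if_out)
  also have "\<dots> = (\<Sum>j\<in>UNIV. fsmult (C k j) (ff j))"
    by (simp add: sum.distrib[symmetric] fsmult_add2[symmetric])
  finally show ?thesis .
qed

lemma lk_pp: "lk (pp j l) {#(a,1),(b,0)#} = (if j = a \<and> l = b then 1 else 0)"
  unfolding pp_def lookup_fbasis by (auto simp: add_eq_conv_ex)


lemma dd: "(\<Sum>i\<in>(UNIV::'i::finite set). \<Sum>j\<in>(UNIV::'i set). f i j * (if i = x \<and> j = y then 1 else (0::complex))) = f x y"
proof -
  have "(\<Sum>i\<in>(UNIV::'i set). \<Sum>j\<in>(UNIV::'i set). f i j * (if i = x \<and> j = y then 1 else (0::complex)))
     = (\<Sum>i\<in>(UNIV::'i set). if i = x then (\<Sum>j\<in>(UNIV::'i set). if j = y then f i j else 0) else 0)"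
  proof -
    have r: "f i j * (if i = x \<and> j = y then 1 else (0::complex)) = (if i = x then (if j = y then f i j else 0) else 0)" for i j
      by simp
    show ?thesis unfolding r sum_if_out ..
  qed
  then show ?thesis by simp
qed

lemma lk_SA: "lk (SA C v) X = (\<Sum>i\<in>UNIV. \<Sum>j\<in>UNIV. C i j / 2 * lk (Q i j v) X)"
  unfolding SA_def by (simp add: lookup_sum)

lemma lk_if: "lk (if P then x else 0) X = (if P then lk x X else 0)"
  by simp

lemma lk_Q_gg: "lk (Q i j (gg k l)) {#(a,1),(b,0)#} =
     (if l = b then 1 else 0) * (if i = k \<and> j = a then 1 else 0)
   + (if k = b then 1 else 0) * (if i = l \<and> j = a then 1 else 0)
   + (if l = b then 1 else 0) * (if i = a \<and> j = k then 1 else 0)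
   + (if k = b then 1 else 0) * (if i = a \<and> j = l then 1 else 0)"
  unfolding Q_gg by (simp only: lookup_add lk_if lk_pp) (auto simp del: One_nat_def)

lemma lk_SA_gg:
  assumes sym: "\<And>i j. C i j = C j i"
  shows "lk (SA C (gg k l)) {#(a,1),(b,0)#} = C k a * (if l = b then 1 else 0) + C l a * (if k = b then 1 else 0)"
proof -
  let ?d = "\<lambda>i j x y. (if i = x \<and> j = y then 1 else (0::complex))"
  have "lk (SA C (gg k l)) {#(a,1),(b,0)#} =
      (if l = b then 1 else 0) * (\<Sum>i\<in>UNIV. \<Sum>j\<in>UNIV. C i j / 2 * ?d i j k a)
    + (if k = b then 1 else 0) * (\<Sum>i\<in>UNIV. \<Sum>j\<in>UNIV. C i j / 2 * ?d i j l a)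
    + (if l = b then 1 else 0) * (\<Sum>i\<in>UNIV. \<Sum>j\<in>UNIV. C i j / 2 * ?d i j a k)
    + (if k = b then 1 else 0) * (\<Sum>i\<in>UNIV. \<Sum>j\<in>UNIV. C i j / 2 * ?d i j a l)"
    unfolding lk_SA lk_Q_gg
    by (simp only: sum_distrib_left distrib_left sum.distrib mult.assoc mult.left_commute)
  also have "\<dots> = (if l = b then 1 else 0) * (C k a / 2) + (if k = b then 1 else 0) * (C l a / 2)
     + (if l = b then 1 else 0) * (C a k / 2) + (if k = b then 1 else 0) * (C a l / 2)"
    by (simp only: dd[where f="\<lambda>i j. C i j / 2"])
  also have "\<dots> = C k a * (if l = b then 1 else 0) + C l a * (if k = b then 1 else 0)"
    using sym[of a k] sym[of a l] by (simp add: field_simps)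
  finally show ?thesis .
qed



lemma maxwt_le: "(\<And>M. M \<in> Poly_Mapping.keys v \<Longrightarrow> mwt M \<le> n) \<Longrightarrow> maxwt v \<le> n"
  unfolding maxwt_def by (subst Max_le_iff) auto

lemma vmode_gg:
  fixes i j :: "'i::linorder"
  assumes "maxwt v \<le> 2"
  shows "vmode (gg i j) 0 v = Q i j v"
proof -
  have "sorted_list_of_multiset {#(i,0::nat),(j,0)#} = [(i,0),(j,0)] \<or>
        sorted_list_of_multiset {#(i,0::nat),(j,0)#} = [(j,0),(i,0)]"
    by simp
  then show ?thesis unfolding gg_def vmode_fbasis
    using modeL2_0[OF assms, of i j] modeL2_0[OF assms, of j i] Q_sym[of i j v] by auto
qed

lemma vmode_ff: "vmode (ff i) 0 v = 0"
  unfolding ff_def vmode_fbasis sorted_list_of_multiset_singleton by (rule modeL1)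

lemma vmode_w_SA:
  fixes w :: "('i::{finite,linorder}) fock"
  assumes wt: "\<And>N. lk w N \<noteq> 0 \<Longrightarrow> mwt N = 2" and mv: "maxwt v \<le> 2"
  shows "vmode w 0 v = SA (Amat w) v"
proof -
  have "vmode w 0 v = vmode ((\<Sum>i\<in>UNIV. \<Sum>j\<in>UNIV. fsmult (Amat w i j / 2) (gg i j))
           + (\<Sum>i\<in>UNIV. fsmult (lk w {#(i,1)#}) (ff i))) 0 v"
    using arg_cong[OF w_decomp[OF wt], where f="\<lambda>u. vmode u 0 v"] .
  also have "\<dots> = SA (Amat w) v"
    unfolding SA_def by (simp add: vmode_add vmode_sum vmode_smult vmode_gg[OF mv] vmode_ff)
  finally show ?thesis .
qed

lemma vmode_omega0_0:
  assumes mv: "maxwt v \<le> 2"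
  shows "vmode (omega0 :: ('i::{finite,linorder}) fock) 0 v = SA (\<lambda>i j. if i = j then 1 else 0) v"
proof -
  have "vmode (omega0 :: 'i fock) 0 v = fsmult (1/2) (\<Sum>i\<in>UNIV. Q i i v)"
    unfolding vmode_omega0 using modeL2_0[OF mv] by simp
  also have "\<dots> = SA (\<lambda>i j. if i = j then 1 else 0) v"
  proof -
    have r: "fsmult ((if i = j then 1 else 0) / 2) X = (if i = j then fsmult (1/2) X else 0)" for i j :: 'i and X
      by simp
    show ?thesis unfolding SA_def r by (simp add: fsmult_sum)
  qed
  finally show ?thesis .
qed

lemma lk_SA_ff: "lk (SA C (ff k)) {#(a,1),(b,0)#} = 0"
  unfolding lk_SA lk_Q_ff by simp

lemma lk_SA_w:
  fixes w :: "('i::{finite,linorder}) fock"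
  assumes wt: "\<And>N. lk w N \<noteq> 0 \<Longrightarrow> mwt N = 2" and sym: "\<And>i j. C i j = C j i"
  shows "lk (SA C w) {#(a,1),(b,0)#} = (\<Sum>k\<in>UNIV. Amat w b k * C k a)"
proof -
  let ?X = "{#(a,1),(b,0)#}"
  have "SA C w = SA C ((\<Sum>i\<in>UNIV. \<Sum>j\<in>UNIV. fsmult (Amat w i j / 2) (gg i j))
           + (\<Sum>i\<in>UNIV. fsmult (lk w {#(i,1)#}) (ff i)))"
    using arg_cong[OF w_decomp[OF wt], where f="SA C"] .
  then have "lk (SA C w) ?X = (\<Sum>i\<in>UNIV. \<Sum>j\<in>UNIV. Amat w i j / 2 * lk (SA C (gg i j)) ?X)
       + (\<Sum>i\<in>UNIV. lk w {#(i,1)#} * lk (SA C (ff i)) ?X)"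
    by (simp add: SA_add SA_sum SA_smult lookup_add lookup_sum)
  also have "\<dots> = (\<Sum>i\<in>UNIV. \<Sum>j\<in>UNIV. Amat w i j / 2 * (C i a * (if j = b then 1 else 0)))
       + (\<Sum>i\<in>UNIV. \<Sum>j\<in>UNIV. Amat w i j / 2 * (C j a * (if i = b then 1 else 0)))"
    unfolding lk_SA_gg[OF sym] lk_SA_ff by (simp add: distrib_left sum.distrib)
  also have "\<dots> = (\<Sum>i\<in>UNIV. Amat w i b / 2 * C i a) + (\<Sum>j\<in>UNIV. Amat w b j / 2 * C j a)"
    by (simp add: if_distrib[of "\<lambda>z. _ * z"] sum.swap[of _ UNIV UNIV] cong: if_cong)
  also have "\<dots> = (\<Sum>k\<in>UNIV. Amat w b k * C k a)"
    by (simp add: Amat_sym[of w _ b] sum.distrib[symmetric] field_simps)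
  finally show ?thesis .
qed



lemma mult_delta01[simp]: "(c::complex) * (if P then 1 else 0) = (if P then c else 0)"
  by simp

lemma fsmult_diff2: "fsmult (a - b) v = fsmult a v - fsmult b v"
  by (rule poly_mapping_eqI) (simp add: lookup_minus algebra_simps)

lemma emb_ee: "emb x = (\<Sum>k\<in>UNIV. fsmult (x k) (ee k))"
  unfolding emb_def ee_def ..

lemma keys_fsmult_sub: "Poly_Mapping.keys (fsmult c v) \<subseteq> Poly_Mapping.keys v"
  by (auto simp: in_keys_iff)

lemma keys_emb: "Poly_Mapping.keys (emb x) \<subseteq> range (\<lambda>k. {#(k,0)#})"
proof -
  have "Poly_Mapping.keys (emb x) \<subseteq> (\<Union>k. Poly_Mapping.keys (fsmult (x k) (fbasis {#(k,0)#})))"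
    unfolding emb_def by (rule keys_sum)
  also have "\<dots> \<subseteq> range (\<lambda>k. {#(k,0)#})"
    using keys_fsmult_sub by (fastforce simp: fbasis_def)
  finally show ?thesis .
qed

lemma maxwt_emb: "maxwt (emb x) \<le> 2"
proof (rule maxwt_le)
  fix M assume "M \<in> Poly_Mapping.keys (emb x)"
  then obtain k where "M = {#(k,0)#}" using keys_emb by blast
  then show "mwt M \<le> 2" by simp
qed

lemma lk_emb: "lk (emb (x :: 'i::finite \<Rightarrow> complex)) {#(k,0)#} = x k"
  unfolding emb_def by (simp add: lookup_sum lookup_fbasis)

lemma V1_emb: "V1 = range (emb :: ('i::finite \<Rightarrow> complex) \<Rightarrow> 'i fock)"
proof (intro equalityI subsetI)
  fix v :: "'i fock" assume v: "v \<in> V1"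
  have "v = emb (\<lambda>k. lk v {#(k,0)#})"
  proof (rule poly_mapping_eqI)
    fix N
    show "lk v N = lk (emb (\<lambda>k. lk v {#(k,0)#})) N"
    proof (cases "N \<in> Poly_Mapping.keys v")
      case True
      then obtain k where N: "N = {#(k,0)#}" using v unfolding V1_def by blast
      show ?thesis unfolding N lk_emb ..
    next
      case False
      then have "lk v N = 0" by (simp add: in_keys_iff)
      moreover have "lk (emb (\<lambda>k. lk v {#(k,0)#})) N = 0"
        unfolding emb_def lookup_sum using False
        by (intro sum.neutral) (auto simp: lookup_fbasis in_keys_iff)
      ultimately show ?thesis by simp
    qed
  qed
  then show "v \<in> range emb" by blast
next
  fix v :: "'i fock" assume "v \<in> range emb"
  then show "v \<in> V1" using keys_emb unfolding V1_def by blast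
qed

lemma SA_emb:
  assumes sym: "\<And>i j. C i j = C j i"
  shows "SA C (emb x) = (\<Sum>j\<in>UNIV. fsmult (\<Sum>k\<in>UNIV. C k j * x k) (ff j))"
proof -
  have "SA C (emb x) = (\<Sum>k\<in>UNIV. \<Sum>j\<in>UNIV. fsmult (C k j * x k) (ff j))"
    unfolding emb_ee SA_sum SA_smult SA_ee[OF sym] by (simp add: fsmult_sum fsmult_mult mult.commute)
  also have "\<dots> = (\<Sum>j\<in>UNIV. fsmult (\<Sum>k\<in>UNIV. C k j * x k) (ff j))"
    by (subst sum.swap) (simp add: sum_fsmult)
  finally show ?thesis .
qed

lemma ff_indep: "(\<Sum>j\<in>UNIV. fsmult (c j) (ff (j :: 'i::finite))) = 0 \<longleftrightarrow> (\<forall>j. c j = 0)"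
proof
  assume h: "(\<Sum>j\<in>UNIV. fsmult (c j) (ff j)) = 0"
  show "\<forall>j. c j = 0"
  proof
    fix a
    have "lk (\<Sum>j\<in>UNIV. fsmult (c j) (ff j)) {#(a,1)#} = c a"
      unfolding ff_def lookup_sum by (simp add: lookup_fbasis)
    then show "c a = 0" using h by simp
  qed
qed simp

lemma Amap_idem:
  assumes idem: "\<And>b a. (\<Sum>k\<in>UNIV. Amat w b k * Amat w k a) = Amat w b a"
  shows "Amap w (Amap w y) = Amap w y"
proof
  fix i
  have "Amap w (Amap w y) i = (\<Sum>j\<in>UNIV. \<Sum>k\<in>UNIV. Amat w i j * Amat w j k * y k)"
    unfolding Amap_def by (simp add: sum_distrib_left mult.assoc)
  also have "\<dots> = (\<Sum>k\<in>UNIV. (\<Sum>j\<in>UNIV. Amat w i j * Amat w j k) * y k)"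
    by (subst sum.swap) (simp add: sum_distrib_right)
  also have "\<dots> = Amap w y i" unfolding Amap_def idem ..
  finally show "Amap w (Amap w y) i = Amap w y i" .
qed

theorem proposition4p1:
  fixes w :: "('i::{finite,linorder}) fock"
  assumes "semi_conformal w"
  shows "emb ` range (Amap w) = {v \<in> V1. vmode omega0 0 v - vmode w 0 v = 0}
         \<and> emb ` {x. Amap w x = (\<lambda>_. 0)} = {v \<in> V1. vmode w 0 v = 0}"
proof -
  from assms obtain U where sub: "vertex_subalg U" and cv: "conformal_vector_of U w"
    and sc: "\<And>u n. u \<in> U \<Longrightarrow> n \<ge> 0 \<Longrightarrow> vmode w n u = vmode omega0 n u"
    unfolding semi_conformal_def by blast
  from cv have wU: "w \<in> U" unfolding conformal_vector_of_def by blast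
  have "\<exists>c::complex. \<forall>m n::int. \<forall>u\<in>U.
        vmode w (m+1) (vmode w (n+1) u) - vmode w (n+1) (vmode w (m+1) u)
        = fsmult (of_int (m - n)) (vmode w (m+n+1) u)
          + (if m + n = 0 then fsmult ((of_int m ^ 3 - of_int m) / 12 * c) u else 0)"
    using cv unfolding conformal_vector_of_def by (rule conjunct1[OF conjunct2])
  then obtain c :: complex where vir0: "\<forall>m n::int. \<forall>u\<in>U.
        vmode w (m+1) (vmode w (n+1) u) - vmode w (n+1) (vmode w (m+1) u)
        = fsmult (of_int (m - n)) (vmode w (m+n+1) u)
          + (if m + n = 0 then fsmult ((of_int m ^ 3 - of_int m) / 12 * c) u else 0)" by blast
  have vir: "vmode w (m+1) (vmode w (n+1) u) - vmode w (n+1) (vmode w (m+1) u)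
        = fsmult (of_int (m - n)) (vmode w (m+n+1) u)
          + (if m + n = 0 then fsmult ((of_int m ^ 3 - of_int m) / 12 * c) u else 0)"
    if "u \<in> U" for m n u using vir0 that by blast
  from sub have vU: "vac \<in> U" unfolding vertex_subalg_def by blast
  have L0vac: "vmode (omega0 :: 'i fock) 1 vac = 0"
  proof (rule poly_mapping_eqI)
    fix N
    show "lk (vmode (omega0 :: 'i fock) 1 vac) N = lk 0 N"
      unfolding L0_lookup by (simp add: vac_def lookup_fbasis)
  qed
  have "vmode w 1 (vmode w (-1) vac) - vmode w (-1) (vmode w 1 vac) = fsmult 2 (vmode w (-1) vac)"
    using vir[OF vU, of 0 "-2"] by simp
  then have w1: "vmode w 1 w = fsmult 2 w"
    using sc[OF vU, of 1] L0vac by (simp add: vmode_create)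
  have wt: "mwt N = 2" if "lk w N \<noteq> 0" for N
  proof -
    have "vmode omega0 1 w = fsmult 2 w" using sc[OF wU, of 1] w1 by simp
    then have "of_nat (mwt N) * lk w N = 2 * lk w N"
      using arg_cong[of _ _ "\<lambda>v. lk v N"] L0_lookup by (metis lookup_fsmult)
    then have "(of_nat (mwt N) :: complex) = of_nat 2" using that by simp
    then show ?thesis by (simp only: of_nat_eq_iff)
  qed
  have mw: "maxwt w \<le> 2" by (rule maxwt_le) (use wt in \<open>auto simp: in_keys_iff\<close>)
  have symA: "\<And>i j. Amat w i j = Amat w j i" by (rule Amat_sym)
  have symI: "\<And>i j. (if i = j then 1 else 0 :: complex) = (if j = i then 1 else 0)" by auto
  have idem: "(\<Sum>k\<in>UNIV. Amat w b k * Amat w k a) = Amat w b a" for a b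
  proof -
    have "vmode w 0 w = vmode omega0 0 w" using sc[OF wU, of 0] by simp
    then have "SA (Amat w) w = SA (\<lambda>i j. if i = j then 1 else 0) w"
      using vmode_w_SA[OF wt mw] vmode_omega0_0[OF mw] by simp
    then have "lk (SA (Amat w) w) {#(a,1),(b,0)#} = lk (SA (\<lambda>i j. if i = j then 1 else 0) w) {#(a,1),(b,0)#}"
      by (rule arg_cong)
    moreover have "lk (SA (Amat w) w) {#(a,1),(b,0)#} = (\<Sum>k\<in>UNIV. Amat w b k * Amat w k a)"
      by (rule lk_SA_w[OF wt symA])
    moreover have "lk (SA (\<lambda>i j. if i = j then 1 else 0) w) {#(a,1),(b,0)#}
         = (\<Sum>k\<in>UNIV. Amat w b k * (if k = a then 1 else 0))"
      by (rule lk_SA_w[OF wt]) auto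
    ultimately show ?thesis by simp
  qed
  have Lw: "vmode w 0 (emb x) = (\<Sum>j\<in>UNIV. fsmult (Amap w x j) (ff j))" for x
  proof -
    have "vmode w 0 (emb x) = SA (Amat w) (emb x)" by (rule vmode_w_SA[OF wt maxwt_emb])
    also have "\<dots> = (\<Sum>j\<in>UNIV. fsmult (\<Sum>k\<in>UNIV. Amat w k j * x k) (ff j))" by (rule SA_emb[OF symA])
    also have "\<dots> = (\<Sum>j\<in>UNIV. fsmult (Amap w x j) (ff j))" unfolding Amap_def by (simp add: symA)
    finally show ?thesis .
  qed
  have Lo: "vmode omega0 0 (emb x) = (\<Sum>j\<in>UNIV. fsmult (x j) (ff j))" for x :: "'i \<Rightarrow> complex"
  proof -
    have "vmode omega0 0 (emb x) = SA (\<lambda>i j. if i = j then 1 else 0) (emb x)" by (rule vmode_omega0_0[OF maxwt_emb])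
    also have "\<dots> = (\<Sum>j\<in>UNIV. fsmult (\<Sum>k\<in>UNIV. (if k = j then 1 else 0) * x k) (ff j))"
      by (rule SA_emb) auto
    also have "\<dots> = (\<Sum>j\<in>UNIV. fsmult (x j) (ff j))"
      by (simp add: if_distrib[of "\<lambda>z. z * _"] cong: if_cong)
    finally show ?thesis .
  qed
  have D: "vmode omega0 0 (emb x) - vmode w 0 (emb x) = (\<Sum>j\<in>UNIV. fsmult (x j - Amap w x j) (ff j))" for x
    unfolding Lw Lo by (simp add: fsmult_diff2 sum_subtractf)
  have inj: "inj (emb :: ('i \<Rightarrow> complex) \<Rightarrow> 'i fock)"
    by (rule injI) (metis lk_emb ext)
  have P1: "emb ` range (Amap w) = {v \<in> V1. vmode omega0 0 v - vmode w 0 v = 0}"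
  proof (intro equalityI subsetI)
    fix v assume "v \<in> emb ` range (Amap w)"
    then obtain y where v: "v = emb (Amap w y)" by blast
    have "vmode omega0 0 (emb (Amap w y)) - vmode w 0 (emb (Amap w y)) = 0"
      unfolding D using Amap_idem[OF idem] by simp
    then show "v \<in> {v \<in> V1. vmode omega0 0 v - vmode w 0 v = 0}"
      unfolding v using V1_emb by auto
  next
    fix v assume a: "v \<in> {v \<in> V1. vmode omega0 0 v - vmode w 0 v = 0}"
    then have vV: "v \<in> V1" and h: "vmode omega0 0 v - vmode w 0 v = 0" by auto
    from vV obtain x where v: "v = emb x" using V1_emb by blast
    from h have z: "vmode omega0 0 (emb x) - vmode w 0 (emb x) = 0" unfolding v .
    then have "\<forall>j. x j - Amap w x j = 0" unfolding D ff_indep .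
    then have "x = Amap w x" by auto
    then show "v \<in> emb ` range (Amap w)" using v by (metis rangeI image_eqI)
  qed
  have P2: "emb ` {x. Amap w x = (\<lambda>_. 0)} = {v \<in> V1. vmode w 0 v = 0}"
  proof (intro equalityI subsetI)
    fix v assume "v \<in> emb ` {x. Amap w x = (\<lambda>_. 0)}"
    then obtain x where v: "v = emb x" and x: "Amap w x = (\<lambda>_. 0)" by blast
    have "vmode w 0 (emb x) = 0" unfolding Lw using x by simp
    then show "v \<in> {v \<in> V1. vmode w 0 v = 0}"
      unfolding v using V1_emb by auto
  next
    fix v assume a: "v \<in> {v \<in> V1. vmode w 0 v = 0}"
    then have vV: "v \<in> V1" and h: "vmode w 0 v = 0" by auto
    from vV obtain x where v: "v = emb x" using V1_emb by blast
    from h have z: "vmode w 0 (emb x) = 0" unfolding v .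
    then have "\<forall>j. Amap w x j = 0" unfolding Lw ff_indep .
    then have "Amap w x = (\<lambda>_. 0)" by auto
    then show "v \<in> emb ` {x. Amap w x = (\<lambda>_. 0)}" using v by blast
  qed
  from P1 P2 show ?thesis ..
qed

end
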